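(* Let $\epsilon>0$ be a constant, $|N|=n$, $k=n^{1/4-\epsilon/2}$, $r=n^{1/4}$, and define $g(S)=|S|$, $b(S)=\min(|S|,\log n)$, $m(S)=\min(1,|S|/n^{1/2})$, $m^+(S)=n^{-1/4}\min(n^{1/2},|S|)$. Then the class $\mathcal F(g,b,m,m^+)$ has an $(n^{1/4-\epsilon},0)$-gap with $t=n^{1/2+\epsilon/4}$.
   Context: $\mathcal P$ is the set of partitions $P$ of $N$ into $r$ parts $T_1,\dots,T_r$ of $k$ elements each and a part $M$ of the remaining $n-rk$ elements; $\mathcal U(\mathcal P)$ is the uniform distribution on $\mathcal P$; $T_{-i}=\bigcup_{j\ne i}T_j$. $\mathcal F(g,b,m,m^+)=\{f^{P,i}:P\in\mathcal P,i\in[r]\}$ with $f^{P,i}(S)=(1-m(S\cap M))(g(S\cap T_i)+b(S\cap T_{-i}))+m^+(S\cap M)$. The class has an $(\alpha,\beta)$-gap with parameter $t$ if: (1) for every fixed $S$ with $|S|\le t$, with probability $1-n^{-\omega(1)}$ over $P\sim\mathcal U(\mathcal P)$, $g(S\cap T_i)+b(S\cap T_{-i})$ does not depend on $i$; (2) for every fixed $S$ with $|S|\ge t$, with probability $1-n^{-\omega(1)}$ over $P\sim\mathcal U(\mathcal P)$, $m(S\cap M)=1$; (3) for every $S$ with $|S|=k$, $g(S)\ge\max\{\alpha b(S),\alpha m^+(S)\}$; (4) for all $S_1$ with $|S_1|=k$ and $S_2$ with $|S_2|=k/r$, $g(S_1)\ge(1-\beta)r\,g(S_2)$. Statements are asymptotic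 in $n$. *)

theory Defs
  imports Complex_Main
begin

text \<open>Ground set N = {..<n}. A partition P = (T, M): parts T 0, ..., T (r-1) of k elements
  each (T i = {} for i >= r, as a normal form), M = the remaining elements.\<close>
definition partitions :: "nat \<Rightarrow> nat \<Rightarrow> nat \<Rightarrow> ((nat \<Rightarrow> nat set) \<times> nat set) set" where
  "partitions n r k = {(T, M).
      (\<forall>i<r. T i \<subseteq> {..<n} \<and> card (T i) = k) \<and>
      (\<forall>i. r \<le> i \<longrightarrow> T i = {}) \<and>
      (\<forall>i<r. \<forall>j<r. i \<noteq> j \<longrightarrow> T i \<inter> T j = {}) \<and>
      M = {..<n} - (\<Union>i<r. T i)}"

definition Tminus :: "nat \<Rightarrow> (nat \<Rightarrow> nat set) \<Rightarrow> nat \<Rightarrow> nat set" where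
  "Tminus r T i = (\<Union>j\<in>{..<r} - {i}. T j)"

definition unif_prob :: "'a set \<Rightarrow> ('a \<Rightarrow> bool) \<Rightarrow> real" where
  "unif_prob A Q = real (card {x\<in>A. Q x}) / real (card A)"

text \<open>(alpha, beta)-gap with parameter t of the class F(g,b,m,m+); all data are families indexed by n.
  "For every fixed S ... with probability 1 - n^{-omega(1)}" is rendered uniformly in S
  (equivalent, since S may depend on n): failure probability <= n^{-c} eventually, for every c > 0.\<close>
definition has_gap ::
  "(nat \<Rightarrow> nat) \<Rightarrow> (nat \<Rightarrow> nat) \<Rightarrow>
   (nat \<Rightarrow> nat set \<Rightarrow> real) \<Rightarrow> (nat \<Rightarrow> nat set \<Rightarrow> real) \<Rightarrow>
   (nat \<Rightarrow> nat set \<Rightarrow> real) \<Rightarrow> (nat \<Rightarrow> nat set \<Rightarrow> real) \<Rightarrow>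
   (nat \<Rightarrow> real) \<Rightarrow> (nat \<Rightarrow> real) \<Rightarrow> (nat \<Rightarrow> real) \<Rightarrow> bool" where
  "has_gap k r g b m mp \<alpha> \<beta> t \<longleftrightarrow>
     (\<forall>c>0. eventually (\<lambda>n. \<forall>S. S \<subseteq> {..<n} \<and> real (card S) \<le> t n \<longrightarrow>
        1 - unif_prob (partitions n (r n) (k n))
          (\<lambda>(T, M). \<forall>i<r n. \<forall>j<r n.
              g n (S \<inter> T i) + b n (S \<inter> Tminus (r n) T i) =
              g n (S \<inter> T j) + b n (S \<inter> Tminus (r n) T j))
        \<le> real n powr (- c)) at_top) \<and>
     (\<forall>c>0. eventually (\<lambda>n. \<forall>S. S \<subseteq> {..<n} \<and> real (card S) \<ge> t n \<longrightarrow>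
        1 - unif_prob (partitions n (r n) (k n)) (\<lambda>(T, M). m n (S \<inter> M) = 1)
        \<le> real n powr (- c)) at_top) \<and>
     eventually (\<lambda>n. \<forall>S. S \<subseteq> {..<n} \<and> card S = k n \<longrightarrow>
        g n S \<ge> max (\<alpha> n * b n S) (\<alpha> n * mp n S)) at_top \<and>
     eventually (\<lambda>n. \<forall>S1 S2. S1 \<subseteq> {..<n} \<and> S2 \<subseteq> {..<n} \<and> card S1 = k n \<and>
        real (card S2) = real (k n) / real (r n) \<longrightarrow>
        g n S1 \<ge> (1 - \<beta> n) * real (r n) * g n S2) at_top"

end

theory Submission
  imports Defs "HOL-Library.FuncSet" "HOL-Real_Asymp.Real_Asymp"
begin


definition UT :: "nat \<Rightarrow> (nat \<Rightarrow> nat set) \<Rightarrow> nat set" where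
  "UT r T = (\<Union>i<r. T i)"
definition sw :: "nat \<Rightarrow> nat \<Rightarrow> nat \<Rightarrow> nat" where
  "sw a b x = (if x = a then b else if x = b then a else x)"
definition phi :: "nat \<Rightarrow> nat \<Rightarrow> (nat \<Rightarrow> nat set) \<times> nat set \<Rightarrow> (nat \<Rightarrow> nat set) \<times> nat set" where
  "phi a b P = ((\<lambda>i. sw a b ` fst P i), sw a b ` snd P)"
definition fcnt :: "nat \<Rightarrow> nat \<Rightarrow> nat \<Rightarrow> nat set \<Rightarrow> nat" where
  "fcnt n r k A = card {P \<in> partitions n r k. A \<subseteq> UT r (fst P)}"

lemma sw_sw[simp]: "sw a b (sw a b x) = x"
  by (simp add: sw_def)

lemma inj_sw: "inj (sw a b)"
  by (rule injI) (metis sw_sw)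

lemma sw_lessThan: "a < n \<Longrightarrow> b < n \<Longrightarrow> sw a b ` {..<n} = {..<n}"
  by (auto simp: sw_def image_iff)

lemma phi_phi[simp]: "phi a b (phi a b P) = P"
  by (simp add: phi_def image_image)

lemma inj_phi: "inj (phi a b)"
  by (rule injI) (metis phi_phi)

lemma UT_phi: "UT r (fst (phi a b P)) = sw a b ` UT r (fst P)"
  by (simp add: UT_def phi_def image_UN)

lemma UT_sub: "P \<in> partitions n r k \<Longrightarrow> UT r (fst P) \<subseteq> {..<n}"
  by (clarsimp simp: partitions_def UT_def) blast

lemma phi_mem:
  assumes "a < n" "b < n" "P \<in> partitions n r k"
  shows "phi a b P \<in> partitions n r k"
proof -
  obtain T M where P: "P = (T,M)" by (cases P)
  have h: "\<forall>i<r. T i \<subseteq> {..<n} \<and> card (T i) = k" "\<forall>i. r \<le> i \<longrightarrow> T i = {}"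
    "\<forall>i<r. \<forall>j<r. i \<noteq> j \<longrightarrow> T i \<inter> T j = {}" "M = {..<n} - (\<Union>i<r. T i)"
    using assms(3) P by (auto simp: partitions_def)
  have inj: "inj (sw a b)" by (rule inj_sw)
  have M: "sw a b ` M = {..<n} - (\<Union>i<r. sw a b ` T i)"
    using h(4) inj sw_lessThan[OF assms(1,2)] by (simp add: image_set_diff image_UN)
  have s1: "\<forall>i<r. sw a b ` T i \<subseteq> {..<n}"
    using h(1) sw_lessThan[OF assms(1,2)] by blast
  have s2: "\<forall>i<r. card (sw a b ` T i) = k"
    using h(1) card_image[OF inj_on_subset[OF inj subset_UNIV]] by simp
  have s3: "\<forall>i<r. \<forall>j<r. i \<noteq> j \<longrightarrow> sw a b ` T i \<inter> sw a b ` T j = {}"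
    using h(3) inj by (simp add: image_Int[symmetric])
  show ?thesis using M s1 s2 s3 h(2) by (simp add: partitions_def phi_def P)
qed

lemma fcnt_sw:
  assumes "a < n" "b < n"
  shows "fcnt n r k A = fcnt n r k (sw a b ` A)"
proof -
  let ?X = "{P \<in> partitions n r k. A \<subseteq> UT r (fst P)}"
  let ?Y = "{P \<in> partitions n r k. sw a b ` A \<subseteq> UT r (fst P)}"
  have "phi a b ` ?X = ?Y"
  proof
    show "phi a b ` ?X \<subseteq> ?Y"
      using phi_mem[OF assms] by (auto simp: UT_phi)
  next
    show "?Y \<subseteq> phi a b ` ?X"
    proof
      fix Q assume Q: "Q \<in> ?Y"
      have "A \<subseteq> sw a b ` UT r (fst Q)"
      proof
        fix x assume "x \<in> A"
        hence "sw a b x \<in> UT r (fst Q)" using Q by auto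
        hence "sw a b (sw a b x) \<in> sw a b ` UT r (fst Q)" by (rule imageI)
        thus "x \<in> sw a b ` UT r (fst Q)" by simp
      qed
      hence "phi a b Q \<in> ?X"
        using Q phi_mem[OF assms, of Q] by (auto simp: UT_phi)
      moreover have "Q = phi a b (phi a b Q)" by simp
      ultimately show "Q \<in> phi a b ` ?X" by blast
    qed
  qed
  moreover have "card (phi a b ` ?X) = card ?X"
    using card_image[OF inj_on_subset[OF inj_phi subset_UNIV]] by blast
  ultimately show ?thesis by (simp add: fcnt_def)
qed

lemma fcnt_const:
  "finite A \<Longrightarrow> A \<subseteq> {..<n} \<Longrightarrow> B \<subseteq> {..<n} \<Longrightarrow> card A = card B \<Longrightarrow> fcnt n r k A = fcnt n r k B"
proof (induction "card (A - B)" arbitrary: A rule: less_induct)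
  case less
  show ?case
  proof (cases "A = B")
    case True thus ?thesis by simp
  next
    case False
    have fB: "finite B" using less.prems(3) finite_subset by blast
    have "\<not> A \<subseteq> B" using False less.prems fB card_subset_eq by blast
    then obtain a where a: "a \<in> A" "a \<notin> B" by blast
    have "\<not> B \<subseteq> A" using False less.prems fB card_subset_eq by metis
    then obtain b where b: "b \<in> B" "b \<notin> A" by blast
    define A' where "A' = sw a b ` A"
    have A'eq: "A' = insert b (A - {a})"
      using a b by (force simp: A'_def sw_def image_iff)
    have "A' - B = (A - B) - {a}" using A'eq b by auto
    moreover have "card (A - B) > 0" using a less.prems(1) by (auto simp: card_gt_0_iff)
    ultimately have lt: "card (A' - B) < card (A - B)"
      using a less.prems(1) by simp
    have an: "a < n" "b < n" using a b less.prems by auto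
    have e1: "fcnt n r k A = fcnt n r k A'" unfolding A'_def by (rule fcnt_sw[OF an])
    have "card A' = card A" unfolding A'_def using card_image[OF inj_on_subset[OF inj_sw subset_UNIV]] by blast
    moreover have "A' \<subseteq> {..<n}" using A'eq less.prems an by auto
    moreover have "finite A'" using A'eq less.prems by simp
    ultimately have "fcnt n r k A' = fcnt n r k B"
      using less.hyps[OF lt] less.prems by simp
    thus ?thesis using e1 by simp
  qed
qed

lemma finite_partitions: "finite (partitions n r k)"
proof -
  have "partitions n r k \<subseteq> (\<lambda>f. (\<lambda>i. if i < r then f i else {}, {..<n} - (\<Union>i<r. f i))) ` (PiE {..<r} (\<lambda>_. Pow {..<n}))"
  proof
    fix P assume P: "P \<in> partitions n r k"
    obtain T M where PT: "P = (T,M)" by (cases P)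
    have "restrict T {..<r} \<in> PiE {..<r} (\<lambda>_. Pow {..<n})" using P PT by (auto simp: partitions_def)
    moreover have "P = (\<lambda>i. if i < r then restrict T {..<r} i else {}, {..<n} - (\<Union>i<r. restrict T {..<r} i))"
      using P PT by (auto simp: partitions_def fun_eq_iff)
    ultimately show "P \<in> (\<lambda>f. (\<lambda>i. if i < r then f i else {}, {..<n} - (\<Union>i<r. f i))) ` (PiE {..<r} (\<lambda>_. Pow {..<n}))"
      by blast
  qed
  moreover have "finite (PiE {..<r} (\<lambda>_. Pow {..<n}))" by (simp add: finite_PiE)
  ultimately show ?thesis using finite_subset by blast
qed

lemma card_UT: "P \<in> partitions n r k \<Longrightarrow> card (UT r (fst P)) \<le> r * k"
proof -
  assume P: "P \<in> partitions n r k"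
  have "card (UT r (fst P)) \<le> (\<Sum>i<r. card (fst P i))" unfolding UT_def by (rule card_UN_le) simp
  also have "\<dots> = r * k" using P by (auto simp: partitions_def)
  finally show ?thesis .
qed

lemma double_count:
  "(\<Sum>A\<in>{A. A \<subseteq> {..<n} \<and> card A = L}. fcnt n r k A) \<le> card (partitions n r k) * (r*k choose L)"
proof -
  let ?Pi = "partitions n r k"
  let ?Sub = "{A. A \<subseteq> {..<n} \<and> card A = L}"
  have fS: "finite ?Sub" by (rule finite_subset[of _ "Pow {..<n}"]) auto
  have fP: "finite ?Pi" by (rule finite_partitions)
  have "(\<Sum>A\<in>?Sub. fcnt n r k A) = (\<Sum>A\<in>?Sub. \<Sum>P\<in>?Pi. if A \<subseteq> UT r (fst P) then 1 else 0)"
    unfolding fcnt_def using fP by (simp add: sum.inter_filter[symmetric])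
  also have "\<dots> = (\<Sum>P\<in>?Pi. \<Sum>A\<in>?Sub. if A \<subseteq> UT r (fst P) then 1 else 0)"
    by (rule sum.swap)
  also have "\<dots> = (\<Sum>P\<in>?Pi. card {A \<in> ?Sub. A \<subseteq> UT r (fst P)})"
    using fS by (simp add: sum.inter_filter[symmetric])
  also have "\<dots> \<le> (\<Sum>P\<in>?Pi. r*k choose L)"
  proof (rule sum_mono)
    fix P assume P: "P \<in> ?Pi"
    have "{A \<in> ?Sub. A \<subseteq> UT r (fst P)} = {A. A \<subseteq> UT r (fst P) \<and> card A = L}"
      using UT_sub[OF P] by auto
    moreover have "finite (UT r (fst P))" using UT_sub[OF P] finite_subset by blast
    ultimately have "card {A \<in> ?Sub. A \<subseteq> UT r (fst P)} = card (UT r (fst P)) choose L"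
      by (simp add: n_subsets)
    also have "\<dots> \<le> r*k choose L" by (rule binomial_right_mono[OF card_UT[OF P]])
    finally show "card {A \<in> ?Sub. A \<subseteq> UT r (fst P)} \<le> r*k choose L" .
  qed
  also have "\<dots> = card ?Pi * (r*k choose L)" by simp
  finally show ?thesis .
qed

lemma bad_bound:
  assumes S: "S \<subseteq> {..<n}" and L: "L \<le> n"
  shows "card {P \<in> partitions n r k. L \<le> card (S \<inter> UT r (fst P))} * (n choose L)
     \<le> (card S choose L) * (r*k choose L) * card (partitions n r k)"
proof -
  let ?Pi = "partitions n r k"
  obtain A0 where A0: "A0 \<subseteq> {..<n}" "card A0 = L" "finite A0"
    using obtain_subset_with_card_n[of L "{..<n}"] L by auto
  define f0 where "f0 = fcnt n r k A0"
  have fc: "\<And>A. A \<subseteq> {..<n} \<Longrightarrow> card A = L \<Longrightarrow> fcnt n r k A = f0"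
  proof -
    fix A assume A: "A \<subseteq> {..<n}" "card A = L"
    have "finite A" using A finite_subset by blast
    thus "fcnt n r k A = f0" unfolding f0_def using fcnt_const[of A n A0] A A0 by simp
  qed
  have "(\<Sum>A\<in>{A. A \<subseteq> {..<n} \<and> card A = L}. fcnt n r k A) = (n choose L) * f0"
    using fc by (simp add: n_subsets)
  hence f0b: "(n choose L) * f0 \<le> card ?Pi * (r*k choose L)" using double_count by metis
  have fS: "finite S" using S finite_subset by blast
  let ?SubS = "{A. A \<subseteq> S \<and> card A = L}"
  have fSS: "finite ?SubS" by (rule finite_subset[of _ "Pow S"]) (use fS in auto)
  have "{P \<in> ?Pi. L \<le> card (S \<inter> UT r (fst P))} \<subseteq> (\<Union>A\<in>?SubS. {P \<in> ?Pi. A \<subseteq> UT r (fst P)})"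
  proof
    fix P assume P: "P \<in> {P \<in> ?Pi. L \<le> card (S \<inter> UT r (fst P))}"
    hence PP: "P \<in> ?Pi" and Lc: "L \<le> card (S \<inter> UT r (fst P))" by auto
    obtain A where A: "A \<subseteq> S \<inter> UT r (fst P)" "card A = L"
      using obtain_subset_with_card_n[OF Lc] by metis
    have "A \<in> ?SubS" using A by blast
    moreover have "P \<in> {P \<in> ?Pi. A \<subseteq> UT r (fst P)}" using A PP by blast
    ultimately show "P \<in> (\<Union>A\<in>?SubS. {P \<in> ?Pi. A \<subseteq> UT r (fst P)})" by blast
  qed
  hence "card {P \<in> ?Pi. L \<le> card (S \<inter> UT r (fst P))} \<le> card (\<Union>A\<in>?SubS. {P \<in> ?Pi. A \<subseteq> UT r (fst P)})"
    by (rule card_mono[rotated]) (use fSS finite_partitions in auto)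
  also have "\<dots> \<le> (\<Sum>A\<in>?SubS. fcnt n r k A)"
    unfolding fcnt_def by (rule card_UN_le[OF fSS])
  also have "\<dots> = (\<Sum>A\<in>?SubS. f0)"
    by (rule sum.cong) (use fc S in auto)
  also have "\<dots> = (card S choose L) * f0"
    by (simp add: n_subsets[OF fS])
  finally have "card {P \<in> ?Pi. L \<le> card (S \<inter> UT r (fst P))} \<le> (card S choose L) * f0" .
  hence "card {P \<in> ?Pi. L \<le> card (S \<inter> UT r (fst P))} * (n choose L) \<le> ((card S choose L) * f0) * (n choose L)"
    by (rule mult_le_mono1)
  also have "\<dots> = (card S choose L) * ((n choose L) * f0)" by (simp only: mult.commute mult.left_commute)
  also have "\<dots> \<le> (card S choose L) * (card ?Pi * (r*k choose L))"
    using f0b by (rule mult_le_mono2)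
  also have "\<dots> = (card S choose L) * (r*k choose L) * card ?Pi" by (simp only: mult.commute mult.left_commute mult.assoc)
  finally show ?thesis .
qed



lemma partitions_nonempty:
  assumes "r * k \<le> n" shows "partitions n r k \<noteq> {}"
proof -
  define T where "T = (\<lambda>i. if i < r then {i*k..<(i+1)*k} else {})"
  have sub: "\<forall>i<r. T i \<subseteq> {..<n} \<and> card (T i) = k"
  proof (intro allI impI)
    fix i assume i: "i < r"
    have "(i+1)*k \<le> r*k" using i by (intro mult_le_mono1) simp
    thus "T i \<subseteq> {..<n} \<and> card (T i) = k" using i assms by (auto simp: T_def)
  qed
  have dis: "\<forall>i<r. \<forall>j<r. i \<noteq> j \<longrightarrow> T i \<inter> T j = {}"
  proof (intro allI impI)
    fix i j assume ij: "i < r" "j < r" "i \<noteq> j"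
    show "T i \<inter> T j = {}"
    proof (cases "i < j")
      case True
      hence "(i+1)*k \<le> j*k" by (intro mult_le_mono1) simp
      thus ?thesis using ij by (auto simp: T_def)
    next
      case False
      hence "(j+1)*k \<le> i*k" using ij by (intro mult_le_mono1) simp
      thus ?thesis using ij by (auto simp: T_def)
    qed
  qed
  have "(T, {..<n} - (\<Union>i<r. T i)) \<in> partitions n r k"
    using sub dis by (auto simp: partitions_def T_def)
  thus ?thesis by blast
qed

lemma div_cross: "(0::real) < P \<Longrightarrow> 0 < C \<Longrightarrow> a*C \<le> B*P \<Longrightarrow> a/P \<le> B/C"
  by (simp add: field_simps)

lemma choose_le_pow_real: "real (a choose b) \<le> real a ^ b"
proof (cases "b \<le> a")
  case True thus ?thesis using binomial_le_pow[OF True] by (metis of_nat_le_iff of_nat_power)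
next
  case False thus ?thesis by (simp add: binomial_eq_0)
qed

lemma ratio_bound:
  fixes a b n L :: nat
  assumes Ln: "L \<le> n" and L0: "0 < L"
  shows "real (a choose L) * real (b choose L) / real (n choose L) \<le> (real a * real b * real L / real n) ^ L"
proof -
  have n0: "0 < n" using Ln L0 by simp
  have nb: "(real n / real L) ^ L \<le> real (n choose L)" by (rule binomial_ge_n_over_k_pow_k[OF Ln])
  have np: "(real n / real L) ^ L > 0" using n0 L0 by simp
  have "real (a choose L) * real (b choose L) \<le> real a ^ L * real b ^ L"
    by (intro mult_mono choose_le_pow_real) auto
  hence "real (a choose L) * real (b choose L) / real (n choose L)
      \<le> real a ^ L * real b ^ L / (real n / real L) ^ L"
    using nb np by (intro frac_le) auto
  also have "\<dots> = (real a * real b * real L / real n) ^ L"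
    by (simp add: power_divide power_mult_distrib)
  finally show ?thesis .
qed

lemma base_bound:
  fixes n s rk L \<epsilon> :: real
  assumes n2: "n \<ge> 2" and s: "0 \<le> s" "s \<le> n powr (1/2+\<epsilon>/4)" and rk: "0 \<le> rk" "rk \<le> n powr (1/2-\<epsilon>/2)"
    and L: "0 \<le> L" "L \<le> ln n + 1"
    and A2: "(ln n + 1) * n powr (-\<epsilon>/4) \<le> n powr (-\<epsilon>/8)"
  shows "s * rk * L / n \<le> n powr (-\<epsilon>/8)"
proof -
  have "s * rk * L \<le> n powr (1/2+\<epsilon>/4) * n powr (1/2-\<epsilon>/2) * (ln n + 1)"
    using s rk L by (intro mult_mono) auto
  also have "n powr (1/2+\<epsilon>/4) * n powr (1/2-\<epsilon>/2) = n * n powr (-\<epsilon>/4)"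
  proof -
    have "n powr (1/2+\<epsilon>/4) * n powr (1/2-\<epsilon>/2) = n powr ((1/2+\<epsilon>/4) + (1/2-\<epsilon>/2))" by (rule powr_add[symmetric])
    also have "(1/2+\<epsilon>/4) + (1/2-\<epsilon>/2) = 1 + (-\<epsilon>/4)" by simp
    also have "n powr (1 + (-\<epsilon>/4)) = n powr 1 * n powr (-\<epsilon>/4)" by (rule powr_add)
    also have "n powr 1 = n" using n2 by simp
    finally show ?thesis .
  qed
  also have "n * n powr (-\<epsilon>/4) * (ln n + 1) = n * ((ln n + 1) * n powr (-\<epsilon>/4))" by simp
  also have "\<dots> \<le> n * n powr (-\<epsilon>/8)" using A2 n2 by simp
  finally show ?thesis using n2 by (simp add: field_simps)
qed

lemma pow_bound:
  fixes n \<epsilon> c :: real and L :: nat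
  assumes n2: "n \<ge> 2" and e: "\<epsilon> > 0" and A3: "8*c/\<epsilon> \<le> ln n" and L: "ln n < real L"
  shows "(n powr (-\<epsilon>/8)) ^ L \<le> n powr (-c)"
proof -
  have "(n powr (-\<epsilon>/8)) ^ L = n powr (real L * (-\<epsilon>/8))"
    using n2 by (simp add: powr_power)
  also have "\<dots> \<le> n powr (-c)"
  proof (rule powr_mono)
    have "c \<le> \<epsilon>/8 * ln n" using A3 e by (simp add: field_simps)
    also have "\<dots> \<le> \<epsilon>/8 * real L" using L e by simp
    finally show "real L * (-\<epsilon>/8) \<le> -c" by (simp add: algebra_simps)
  qed (use n2 in simp)
  finally show ?thesis .
qed
lemma part1_core:
  fixes n r k L :: nat and \<epsilon> c :: real and S :: "nat set"
  assumes e: "\<epsilon> > 0" and n2: "n \<ge> 2"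
    and rk: "real (r*k) \<le> real n powr (1/2-\<epsilon>/2)" "r*k \<le> n"
    and A2: "(ln (real n) + 1) * real n powr (-\<epsilon>/4) \<le> real n powr (-\<epsilon>/8)"
    and A3: "8*c/\<epsilon> \<le> ln (real n)"
    and A4: "ln (real n) + 1 \<le> real n"
    and S: "S \<subseteq> {..<n}" and Sc: "real (card S) \<le> real n powr (1/2+\<epsilon>/4)"
  shows "1 - unif_prob (partitions n r k)
          (\<lambda>(T, M). \<forall>i<r. \<forall>j<r.
              real (card (S \<inter> T i)) + min (real (card (S \<inter> Tminus r T i))) (ln (real n)) =
              real (card (S \<inter> T j)) + min (real (card (S \<inter> Tminus r T j))) (ln (real n)))
        \<le> real n powr (- c)"
proof -
  let ?Pi = "partitions n r k"
  define good where "good = (\<lambda>(T, M::nat set). \<forall>i<r. \<forall>j<r.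
              real (card (S \<inter> T i)) + min (real (card (S \<inter> Tminus r T i))) (ln (real n)) =
              real (card (S \<inter> T j)) + min (real (card (S \<inter> Tminus r T j))) (ln (real n)))"
  define L where "L = nat \<lfloor>ln (real n)\<rfloor> + 1"
  have x1: "real n \<ge> 2" using n2 by simp
  have lnpos: "ln (real n) \<ge> 0" using x1 by simp
  have L1: "real L \<le> ln (real n) + 1" using lnpos by (simp add: L_def)
  have L2: "ln (real n) < real L" using lnpos by (simp add: L_def) linarith
  have Ln: "L \<le> n" using L1 A4 by linarith
  have fP: "finite ?Pi" by (rule finite_partitions)
  have nP: "?Pi \<noteq> {}" by (rule partitions_nonempty[OF rk(2)])
  have cP: "card ?Pi > 0" using fP nP by (simp add: card_gt_0_iff)
  let ?bad = "{P \<in> ?Pi. L \<le> card (S \<inter> UT r (fst P))}"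
  have sub: "{P \<in> ?Pi. \<not> good P} \<subseteq> ?bad"
  proof
    fix P assume P: "P \<in> {P \<in> ?Pi. \<not> good P}"
    obtain T M where PT: "P = (T, M)" by (cases P)
    have PP: "P \<in> ?Pi" using P by simp
    have dis: "\<forall>i<r. \<forall>j<r. i \<noteq> j \<longrightarrow> T i \<inter> T j = {}" and fin: "\<forall>i<r. finite (T i)"
      using PP PT by (auto simp: partitions_def intro: finite_subset)
    show "P \<in> ?bad"
    proof (rule ccontr)
      assume "P \<notin> ?bad"
      hence lt: "card (S \<inter> UT r T) < L" using PP PT by simp
      hence le: "real (card (S \<inter> UT r T)) \<le> ln (real n)" using L2 L_def lnpos by (simp add: L_def) linarith
      have val: "real (card (S \<inter> T i)) + min (real (card (S \<inter> Tminus r T i))) (ln (real n)) = real (card (S \<inter> UT r T))"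
        if i: "i < r" for i
      proof -
        have U: "S \<inter> UT r T = (S \<inter> T i) \<union> (S \<inter> Tminus r T i)"
          using i by (auto simp: UT_def Tminus_def)
        have D: "(S \<inter> T i) \<inter> (S \<inter> Tminus r T i) = {}"
          using i dis by (auto simp: Tminus_def)
        have F1: "finite (S \<inter> T i)" using fin i by simp
        have F2: "finite (S \<inter> Tminus r T i)" using fin by (auto simp: Tminus_def)
        have cU: "card (S \<inter> UT r T) = card (S \<inter> T i) + card (S \<inter> Tminus r T i)"
          using card_Un_disjoint[OF F1 F2 D] U by simp
        hence "real (card (S \<inter> Tminus r T i)) \<le> ln (real n)" using le by simp
        thus ?thesis using cU by simp
      qed
      have "good P" unfolding good_def PT using val by simp
      thus False using P by simp
    qed
  qed
  have "unif_prob ?Pi good = real (card {P \<in> ?Pi. good P}) / real (card ?Pi)"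
    by (simp add: unif_prob_def)
  have cc: "card ?Pi = card {P \<in> ?Pi. good P} + card {P \<in> ?Pi. \<not> good P}"
  proof -
    have "?Pi = {P \<in> ?Pi. good P} \<union> {P \<in> ?Pi. \<not> good P}" by auto
    moreover have "finite {P \<in> ?Pi. good P}" "finite {P \<in> ?Pi. \<not> good P}" using fP by auto
    ultimately show ?thesis by (metis (no_types, lifting) card_Un_disjoint disjoint_iff mem_Collect_eq)
  qed
  have r1: "unif_prob ?Pi good = real (card {P \<in> ?Pi. good P}) / real (card ?Pi)"
    by (simp add: unif_prob_def)
  have r2: "1 - real (card {P \<in> ?Pi. good P}) / real (card ?Pi) = (real (card ?Pi) - real (card {P \<in> ?Pi. good P})) / real (card ?Pi)"
    using cP by (simp add: diff_divide_distrib)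
  have r3: "real (card ?Pi) - real (card {P \<in> ?Pi. good P}) = real (card {P \<in> ?Pi. \<not> good P})"
    using cc by (simp only: of_nat_add)
  have h1: "1 - unif_prob ?Pi good = real (card {P \<in> ?Pi. \<not> good P}) / real (card ?Pi)"
    by (simp only: r1 r2 r3)
  have h2: "real (card {P \<in> ?Pi. \<not> good P}) / real (card ?Pi) \<le> real (card ?bad) / real (card ?Pi)"
  proof -
    have fb: "finite ?bad" using fP by simp
    have "card {P \<in> ?Pi. \<not> good P} \<le> card ?bad" by (rule card_mono[OF fb sub])
    hence "real (card {P \<in> ?Pi. \<not> good P}) \<le> real (card ?bad)" by (simp only: of_nat_le_iff)
    thus ?thesis by (rule divide_right_mono[OF _ of_nat_0_le_iff])
  qed
  have h3: "real (card ?bad) / real (card ?Pi) \<le> real (card S choose L) * real (r*k choose L) / real (n choose L)"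
  proof -
    have b0: "card ?bad * (n choose L) \<le> (card S choose L) * (r*k choose L) * card ?Pi"
      by (rule bad_bound[OF S Ln])
    have b: "real (card ?bad) * real (n choose L) \<le> real (card S choose L) * real (r*k choose L) * real (card ?Pi)"
      using b0 by (simp only: of_nat_mult[symmetric] of_nat_le_iff)
    have "L \<le> n" by (rule Ln)
    hence "n choose L > 0" by simp
    hence cN: "real (n choose L) > 0" by simp
    have cP': "real (card ?Pi) > 0" using cP by simp
    show ?thesis by (rule div_cross[OF cP' cN b])
  qed
  have L0: "0 < L" by (simp add: L_def)
  have h4: "real (card S choose L) * real (r*k choose L) / real (n choose L) \<le> (real (card S) * real (r*k) * real L / real n) ^ L"
    by (rule ratio_bound[OF Ln L0])
  have h5: "(real (card S) * real (r*k) * real L / real n) ^ L \<le> (real n powr (-\<epsilon>/8)) ^ L"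
  proof (rule power_mono)
    show "real (card S) * real (r*k) * real L / real n \<le> real n powr (-\<epsilon>/8)"
      by (rule base_bound[OF x1 _ Sc _ rk(1) _ L1 A2]) auto
  qed simp
  have h7: "(real n powr (-\<epsilon>/8)) ^ L \<le> real n powr (-c)"
    by (rule pow_bound[OF x1 e A3 L2])
  have "1 - unif_prob ?Pi good \<le> real n powr (-c)"
    using h1 h2 h3 h4 h5 h7 by linarith
  thus ?thesis unfolding good_def .
qed



abbreviation kf :: "real \<Rightarrow> nat \<Rightarrow> nat" where "kf \<epsilon> n \<equiv> nat \<lfloor>real n powr (1/4 - \<epsilon>/2)\<rfloor>"
abbreviation rf :: "nat \<Rightarrow> nat" where "rf n \<equiv> nat \<lfloor>real n powr (1/4)\<rfloor>"

lemma ev_real_nat: "eventually P (at_top::real filter) \<Longrightarrow> eventually (\<lambda>n::nat. P (real n)) at_top"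
  using filterlim_real_sequentially unfolding filterlim_iff by blast

lemma nat_floor_le: "0 \<le> y \<Longrightarrow> real (nat \<lfloor>y\<rfloor>) \<le> y"
  by (simp add: of_nat_nat)

lemma rk_real: "real (rf n * kf \<epsilon> n) \<le> real n powr (1/2 - \<epsilon>/2)"
proof -
  have "real (rf n * kf \<epsilon> n) = real (rf n) * real (kf \<epsilon> n)" by simp
  also have "\<dots> \<le> real n powr (1/4) * real n powr (1/4 - \<epsilon>/2)"
    by (intro mult_mono nat_floor_le) auto
  also have "\<dots> = real n powr (1/4 + (1/4 - \<epsilon>/2))" by (rule powr_add[symmetric])
  also have "1/4 + (1/4 - \<epsilon>/2) = 1/2 - \<epsilon>/2" by simp
  finally show ?thesis .
qed

lemma part1:
  assumes e: "\<epsilon> > 0" and c: "c > 0"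
  shows "eventually (\<lambda>n. \<forall>S. S \<subseteq> {..<n} \<and> real (card S) \<le> real n powr (1/2 + \<epsilon>/4) \<longrightarrow>
        1 - unif_prob (partitions n (rf n) (kf \<epsilon> n))
          (\<lambda>(T, M). \<forall>i<rf n. \<forall>j<rf n.
              real (card (S \<inter> T i)) + min (real (card (S \<inter> Tminus (rf n) T i))) (ln (real n)) =
              real (card (S \<inter> T j)) + min (real (card (S \<inter> Tminus (rf n) T j))) (ln (real n)))
        \<le> real n powr (- c)) at_top"
proof -
  have E1: "eventually (\<lambda>n::nat. real n \<ge> 2) at_top" by (rule ev_real_nat) real_asymp
  have E2: "eventually (\<lambda>n::nat. (ln (real n) + 1) * real n powr (-\<epsilon>/4) \<le> real n powr (-\<epsilon>/8)) at_top"
    by (rule ev_real_nat) (use e in real_asymp)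
  have E3: "eventually (\<lambda>n::nat. 8*c/\<epsilon> \<le> ln (real n)) at_top"
    by (rule ev_real_nat) (use e c in real_asymp)
  have E4: "eventually (\<lambda>n::nat. ln (real n) + 1 \<le> real n) at_top"
    by (rule ev_real_nat) real_asymp
  have E5: "eventually (\<lambda>n::nat. real n powr (1/2-\<epsilon>/2) \<le> real n) at_top"
    by (rule ev_real_nat) (use e in real_asymp)
  show ?thesis
  proof (rule eventually_mono[OF eventually_conj[OF E1 eventually_conj[OF E2 eventually_conj[OF E3 eventually_conj[OF E4 E5]]]]])
    fix n :: nat
    assume H: "2 \<le> real n \<and> (ln (real n) + 1) * real n powr (-\<epsilon>/4) \<le> real n powr (-\<epsilon>/8) \<and>
      8*c/\<epsilon> \<le> ln (real n) \<and> ln (real n) + 1 \<le> real n \<and> real n powr (1/2-\<epsilon>/2) \<le> real n"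
    have n2: "n \<ge> 2" using H by linarith
    have rk1: "real (rf n * kf \<epsilon> n) \<le> real n powr (1/2 - \<epsilon>/2)" by (rule rk_real)
    have rk2: "rf n * kf \<epsilon> n \<le> n" proof -
      have "real (rf n * kf \<epsilon> n) \<le> real n" using rk1 H by linarith
      thus ?thesis by (simp only: of_nat_le_iff)
    qed
    show "\<forall>S. S \<subseteq> {..<n} \<and> real (card S) \<le> real n powr (1/2 + \<epsilon>/4) \<longrightarrow>
        1 - unif_prob (partitions n (rf n) (kf \<epsilon> n))
          (\<lambda>(T, M). \<forall>i<rf n. \<forall>j<rf n.
              real (card (S \<inter> T i)) + min (real (card (S \<inter> Tminus (rf n) T i))) (ln (real n)) =
              real (card (S \<inter> T j)) + min (real (card (S \<inter> Tminus (rf n) T j))) (ln (real n)))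
        \<le> real n powr (- c)"
    proof (intro allI impI)
      fix S assume S: "S \<subseteq> {..<n} \<and> real (card S) \<le> real n powr (1/2 + \<epsilon>/4)"
      show "1 - unif_prob (partitions n (rf n) (kf \<epsilon> n))
          (\<lambda>(T, M). \<forall>i<rf n. \<forall>j<rf n.
              real (card (S \<inter> T i)) + min (real (card (S \<inter> Tminus (rf n) T i))) (ln (real n)) =
              real (card (S \<inter> T j)) + min (real (card (S \<inter> Tminus (rf n) T j))) (ln (real n)))
        \<le> real n powr (- c)"
        by (rule part1_core[OF e n2 rk1 rk2]) (use H S in auto)
    qed
  qed
qed

lemma part2:
  assumes e: "\<epsilon> > 0" and c: "c > 0"
  shows "eventually (\<lambda>n. \<forall>S. S \<subseteq> {..<n} \<and> real (card S) \<ge> real n powr (1/2 + \<epsilon>/4) \<longrightarrow>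
        1 - unif_prob (partitions n (rf n) (kf \<epsilon> n)) (\<lambda>(T, M). min 1 (real (card (S \<inter> M)) / sqrt (real n)) = 1)
        \<le> real n powr (- c)) at_top"
proof -
  have E1: "eventually (\<lambda>n::nat. real n \<ge> 2) at_top" by (rule ev_real_nat) real_asymp
  have E2: "eventually (\<lambda>n::nat. real n powr (1/2-\<epsilon>/2) + sqrt (real n) \<le> real n powr (1/2+\<epsilon>/4)) at_top"
    by (rule ev_real_nat) (use e in real_asymp)
  have E5: "eventually (\<lambda>n::nat. real n powr (1/2-\<epsilon>/2) \<le> real n) at_top"
    by (rule ev_real_nat) (use e in real_asymp)
  show ?thesis
  proof (rule eventually_mono[OF eventually_conj[OF E1 eventually_conj[OF E2 E5]]])
    fix n :: nat
    assume H: "2 \<le> real n \<and> real n powr (1/2-\<epsilon>/2) + sqrt (real n) \<le> real n powr (1/2+\<epsilon>/4) \<and>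
       real n powr (1/2-\<epsilon>/2) \<le> real n"
    have rk1: "real (rf n * kf \<epsilon> n) \<le> real n powr (1/2 - \<epsilon>/2)" by (rule rk_real)
    have rk2: "rf n * kf \<epsilon> n \<le> n" proof -
      have "real (rf n * kf \<epsilon> n) \<le> real n" using rk1 H by linarith
      thus ?thesis by (simp only: of_nat_le_iff)
    qed
    let ?Pi = "partitions n (rf n) (kf \<epsilon> n)"
    have fP: "finite ?Pi" by (rule finite_partitions)
    have nP: "?Pi \<noteq> {}" by (rule partitions_nonempty[OF rk2])
    have cP: "card ?Pi > 0" using fP nP by (simp add: card_gt_0_iff)
    have sq: "sqrt (real n) > 0" using H by simp
    show "\<forall>S. S \<subseteq> {..<n} \<and> real (card S) \<ge> real n powr (1/2 + \<epsilon>/4) \<longrightarrow>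
        1 - unif_prob ?Pi (\<lambda>(T, M). min 1 (real (card (S \<inter> M)) / sqrt (real n)) = 1)
        \<le> real n powr (- c)"
    proof (intro allI impI)
      fix S assume S: "S \<subseteq> {..<n} \<and> real (card S) \<ge> real n powr (1/2 + \<epsilon>/4)"
      have all: "min 1 (real (card (S \<inter> M)) / sqrt (real n)) = 1" if P: "(T, M) \<in> ?Pi" for T M
      proof -
        have M: "M = {..<n} - UT (rf n) T" using P by (simp add: partitions_def UT_def)
        have SM: "S \<inter> M = S - UT (rf n) T" using M S by auto
        have fU: "finite (UT (rf n) T)" using UT_sub[OF P] finite_subset by auto
        have "card S - card (UT (rf n) T) \<le> card (S \<inter> M)"
          unfolding SM by (rule diff_card_le_card_Diff[OF fU])
        hence "real (card S) - real (card (UT (rf n) T)) \<le> real (card (S \<inter> M))" by linarith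
        moreover have "card (UT (rf n) T) \<le> rf n * kf \<epsilon> n" using card_UT[OF P] by simp
        hence "real (card (UT (rf n) T)) \<le> real n powr (1/2 - \<epsilon>/2)" using rk1
          by (metis of_nat_le_iff order_trans)
        ultimately have "sqrt (real n) \<le> real (card (S \<inter> M))" using S H by linarith
        hence "1 \<le> real (card (S \<inter> M)) / sqrt (real n)" using sq by simp
        thus ?thesis by simp
      qed
      have "{P \<in> ?Pi. (\<lambda>(T, M). min 1 (real (card (S \<inter> M)) / sqrt (real n)) = 1) P} = ?Pi"
        using all by auto
      hence "unif_prob ?Pi (\<lambda>(T, M). min 1 (real (card (S \<inter> M)) / sqrt (real n)) = 1) = 1"
        using cP by (simp add: unif_prob_def)
      thus "1 - unif_prob ?Pi (\<lambda>(T, M). min 1 (real (card (S \<inter> M)) / sqrt (real n)) = 1)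
        \<le> real n powr (- c)" by simp
    qed
  qed
qed

lemma part3:
  assumes e: "\<epsilon> > 0"
  shows "eventually (\<lambda>n. \<forall>S. S \<subseteq> {..<n} \<and> card S = kf \<epsilon> n \<longrightarrow>
        real (card S) \<ge> max (real n powr (1/4 - \<epsilon>) * min (real (card S)) (ln (real n)))
           (real n powr (1/4 - \<epsilon>) * (real n powr (-1/4) * min (sqrt (real n)) (real (card S))))) at_top"
proof -
  have E1: "eventually (\<lambda>n::nat. real n \<ge> 2) at_top" by (rule ev_real_nat) real_asymp
  have E2: "eventually (\<lambda>n::nat. real n powr (1/4-\<epsilon>) * ln (real n) \<le> real n powr (1/4-\<epsilon>/2)/2) at_top"
    by (rule ev_real_nat) (use e in real_asymp)
  show ?thesis
  proof (rule eventually_mono[OF eventually_conj[OF E1 E2]])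
    fix n :: nat
    assume H: "2 \<le> real n \<and> real n powr (1/4-\<epsilon>) * ln (real n) \<le> real n powr (1/4-\<epsilon>/2)/2"
    have lnp: "ln (real n) \<ge> 0" using H by simp
    define y where "y = real n powr (1/4-\<epsilon>/2)"
    define \<alpha> where "\<alpha> = real n powr (1/4 - \<epsilon>)"
    have ap: "\<alpha> \<ge> 0" by (simp add: \<alpha>_def)
    have a2: "\<alpha> * real n powr (-1/4) \<le> 1"
    proof -
      have "\<alpha> * real n powr (-1/4) = real n powr ((1/4 - \<epsilon>) + (-1/4))"
        unfolding \<alpha>_def by (rule powr_add[symmetric])
      also have "\<dots> \<le> real n powr 0" using H e by (intro powr_mono) auto
      finally show ?thesis using H by simp
    qed
    show "\<forall>S. S \<subseteq> {..<n} \<and> card S = kf \<epsilon> n \<longrightarrow>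
        real (card S) \<ge> max (real n powr (1/4 - \<epsilon>) * min (real (card S)) (ln (real n)))
           (real n powr (1/4 - \<epsilon>) * (real n powr (-1/4) * min (sqrt (real n)) (real (card S))))"
    proof (intro allI impI)
      fix S assume S: "S \<subseteq> {..<n} \<and> card S = kf \<epsilon> n"
      show "real (card S) \<ge> max (real n powr (1/4 - \<epsilon>) * min (real (card S)) (ln (real n)))
           (real n powr (1/4 - \<epsilon>) * (real n powr (-1/4) * min (sqrt (real n)) (real (card S))))"
      proof (cases "card S = 0")
        case True thus ?thesis using lnp by simp
      next
        case False
        have kS: "kf \<epsilon> n = card S" using S by simp
        have k1: "nat \<lfloor>y\<rfloor> \<ge> 1" unfolding y_def using kS False by linarith
        hence f1: "\<lfloor>y\<rfloor> \<ge> 1" by linarith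
        hence f1r: "real_of_int \<lfloor>y\<rfloor> \<ge> 1" by simp
        have fc: "y < real_of_int \<lfloor>y\<rfloor> + 1" using floor_correct[of y] by (simp only: of_int_add of_int_1)
        have "card S = nat \<lfloor>y\<rfloor>" using kS unfolding y_def by simp
        hence "real (card S) = real_of_int \<lfloor>y\<rfloor>" using f1 by simp
        hence ky: "y / 2 \<le> real (card S)" using fc f1r by linarith
        have t1: "\<alpha> * min (real (card S)) (ln (real n)) \<le> real (card S)"
        proof -
          have "\<alpha> * min (real (card S)) (ln (real n)) \<le> \<alpha> * ln (real n)"
            using ap by (intro mult_left_mono) auto
          also have "\<dots> \<le> y / 2" using H by (simp add: \<alpha>_def y_def)
          finally show ?thesis using ky by linarith
        qed
        have t2: "\<alpha> * (real n powr (-1/4) * min (sqrt (real n)) (real (card S))) \<le> real (card S)"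
        proof -
          have "\<alpha> * (real n powr (-1/4) * min (sqrt (real n)) (real (card S)))
              = (\<alpha> * real n powr (-1/4)) * min (sqrt (real n)) (real (card S))" by simp
          also have "\<dots> \<le> 1 * real (card S)"
            using a2 ap by (intro mult_mono) auto
          finally show ?thesis by simp
        qed
        show ?thesis using t1 t2 by (simp add: \<alpha>_def)
      qed
    qed
  qed
qed

lemma part4:
  "eventually (\<lambda>n. \<forall>S1 S2. S1 \<subseteq> {..<n} \<and> S2 \<subseteq> {..<n} \<and> card S1 = kf \<epsilon> n \<and>
        real (card S2) = real (kf \<epsilon> n) / real (rf n) \<longrightarrow>
        real (card S1) \<ge> (1 - 0) * real (rf n) * real (card S2)) at_top"
proof (rule always_eventually, intro allI impI)
  fix n :: nat and S1 S2 :: "nat set"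
  assume H: "S1 \<subseteq> {..<n} \<and> S2 \<subseteq> {..<n} \<and> card S1 = kf \<epsilon> n \<and>
        real (card S2) = real (kf \<epsilon> n) / real (rf n)"
  show "real (card S1) \<ge> (1 - 0) * real (rf n) * real (card S2)"
  proof (cases "rf n = 0")
    case True thus ?thesis by simp
  next
    case False thus ?thesis using H by simp
  qed
qed

theorem lemma25:
  fixes \<epsilon> :: real
  assumes "\<epsilon> > 0"
  shows "has_gap
    (\<lambda>n. nat \<lfloor>real n powr (1/4 - \<epsilon>/2)\<rfloor>)
    (\<lambda>n. nat \<lfloor>real n powr (1/4)\<rfloor>)
    (\<lambda>n S. real (card S))
    (\<lambda>n S. min (real (card S)) (ln (real n)))
    (\<lambda>n S. min 1 (real (card S) / sqrt (real n)))
    (\<lambda>n S. real n powr (-1/4) * min (sqrt (real n)) (real (card S)))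
    (\<lambda>n. real n powr (1/4 - \<epsilon>))
    (\<lambda>n. 0)
    (\<lambda>n. real n powr (1/2 + \<epsilon>/4))"
  unfolding has_gap_def
  using part1[OF assms] part2[OF assms] part3[OF assms] part4[of \<epsilon>]
  by blast


end
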